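(* Let $G$ be a network with three sources and three terminals containing no vertex of type $(3,3)$, $(2,3)$ or $(3,2)$, and let $\mathbb{F}$ be a finite field. For each color $c=(s_a,s_b,t_c,t_d)$ occurring among the $(2,2)$ vertices of $G$, let $f_c:\mathbb{F}^2\to\mathbb{F}$ be an arbitrary function. Then there exists a single network code on $G$ such that, for every such color $c$, every vertex of type $(2,2)$ and color $c$ can compute $f_c(X_a,X_b)$ from the symbols on its incoming edges.
   Context: A network is a finite directed acyclic graph $G=(V,E)$ (parallel edges allowed), every edge of unit capacity carrying one symbol of a finite field $\mathbb{F}$, with three sources $s_1,s_2,s_3$ (no incoming edges; $s_i$ holds $X_i\in\mathbb{F}$) and three terminals $t_1,t_2,t_3$ (no outgoing edges). A network code assigns to each edge leaving a source a function of its symbol, and to each edge leaving a non-source vertex $v$ a function of the symbols on edges entering $v$. For $v\in V$, $c_s(v)$ is the number of sources with a directed path to $v$ and $c_t(v)$ the number of terminals reachable from $v$ (a vertex reaches itself); $(c_s(v),c_t(v))$ is the type of $v$. For $v$ of type $(2,2)$, its color $\mathrm{col}(v)=(s_a,s_b,t_c,t_d)$ lists the two sources reaching $v$ and the two terminals reachable from $v$. *)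

theory Defs
  imports "Graph_Theory.Digraph" "HOL-Library.FuncSet"
begin

definition network :: "('v,'e) pre_digraph \<Rightarrow> (nat \<Rightarrow> 'v) \<Rightarrow> (nat \<Rightarrow> 'v) \<Rightarrow> bool" where
  "network G s t \<longleftrightarrow>
     fin_digraph G \<and>
     (\<forall>v\<in>verts G. \<not> (v \<rightarrow>\<^sup>+\<^bsub>G\<^esub> v)) \<and>
     inj_on s {1,2,3} \<and> inj_on t {1,2,3} \<and>
     s ` {1,2,3} \<subseteq> verts G \<and> t ` {1,2,3} \<subseteq> verts G \<and>
     (\<forall>i\<in>{1,2,3}. in_arcs G (s i) = {}) \<and>
     (\<forall>j\<in>{1,2,3}. out_arcs G (t j) = {})"

definition src_set :: "('v,'e) pre_digraph \<Rightarrow> (nat \<Rightarrow> 'v) \<Rightarrow> 'v \<Rightarrow> nat set" where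
  "src_set G s v = {i \<in> {1,2,3}. s i \<rightarrow>\<^sup>*\<^bsub>G\<^esub> v}"

definition term_set :: "('v,'e) pre_digraph \<Rightarrow> (nat \<Rightarrow> 'v) \<Rightarrow> 'v \<Rightarrow> nat set" where
  "term_set G t v = {j \<in> {1,2,3}. v \<rightarrow>\<^sup>*\<^bsub>G\<^esub> t j}"

definition c_s :: "('v,'e) pre_digraph \<Rightarrow> (nat \<Rightarrow> 'v) \<Rightarrow> 'v \<Rightarrow> nat" where
  "c_s G s v = card (src_set G s v)"

definition c_t :: "('v,'e) pre_digraph \<Rightarrow> (nat \<Rightarrow> 'v) \<Rightarrow> 'v \<Rightarrow> nat" where
  "c_t G t v = card (term_set G t v)"

definition vtype :: "('v,'e) pre_digraph \<Rightarrow> (nat \<Rightarrow> 'v) \<Rightarrow> (nat \<Rightarrow> 'v) \<Rightarrow> 'v \<Rightarrow> nat \<times> nat" where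
  "vtype G s t v = (c_s G s v, c_t G t v)"

text \<open>Color of a (2,2) vertex: (a,b,c,d) with sources s a, s b (a < b) reaching v and
  terminals t c, t d (c < d) reachable from v.\<close>
definition col :: "('v,'e) pre_digraph \<Rightarrow> (nat \<Rightarrow> 'v) \<Rightarrow> (nat \<Rightarrow> 'v) \<Rightarrow> 'v \<Rightarrow> nat \<times> nat \<times> nat \<times> nat" where
  "col G s t v = (Min (src_set G s v), Max (src_set G s v), Min (term_set G t v), Max (term_set G t v))"

text \<open>A network code: srcf e gives the symbol on an arc e leaving a source as a function of
  that source's symbol; locf e gives the symbol on an arc leaving a non-source vertex as a
  function of the symbols on the arcs entering that vertex (an assignment on in-arcs).
  Given source messages X (X i the symbol of s i), sigma is the induced symbol assignment.\<close>
definition induced :: "('v,'e) pre_digraph \<Rightarrow> (nat \<Rightarrow> 'v) \<Rightarrow>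
    ('e \<Rightarrow> 'f \<Rightarrow> 'f) \<Rightarrow> ('e \<Rightarrow> ('e \<Rightarrow> 'f) \<Rightarrow> 'f) \<Rightarrow> (nat \<Rightarrow> 'f) \<Rightarrow> ('e \<Rightarrow> 'f) \<Rightarrow> bool" where
  "induced G s srcf locf X sigma \<longleftrightarrow>
     (\<forall>e\<in>arcs G.
        (\<forall>i\<in>{1,2,3}. tail G e = s i \<longrightarrow> sigma e = srcf e (X i)) \<and>
        (tail G e \<notin> s ` {1,2,3} \<longrightarrow>
           sigma e = locf e (restrict sigma (in_arcs G (tail G e)))))"

definition computes :: "('v,'e) pre_digraph \<Rightarrow> (nat \<Rightarrow> 'v) \<Rightarrow>
    ('e \<Rightarrow> 'f \<Rightarrow> 'f) \<Rightarrow> ('e \<Rightarrow> ('e \<Rightarrow> 'f) \<Rightarrow> 'f) \<Rightarrow> 'v \<Rightarrow> ((nat \<Rightarrow> 'f) \<Rightarrow> 'f) \<Rightarrow> bool" where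
  "computes G s srcf locf v F \<longleftrightarrow>
     (\<exists>dec :: ('e \<Rightarrow> 'f) \<Rightarrow> 'f. \<forall>X sigma. induced G s srcf locf X sigma \<longrightarrow>
        dec (restrict sigma (in_arcs G v)) = F X)"

end

theory Submission
  imports Defs
begin

definition VV :: "('v,'e) pre_digraph \<Rightarrow> (nat \<Rightarrow> 'v) \<Rightarrow> (nat \<Rightarrow> 'v) \<Rightarrow>
   (nat \<times> nat \<times> nat \<times> nat \<Rightarrow> 'f::field \<Rightarrow> 'f \<Rightarrow> 'f) \<Rightarrow> (nat \<Rightarrow> 'f) \<Rightarrow> 'v \<Rightarrow> 'f" where
  "VV G s t f X u = (if card (src_set G s u) = 1 then X (the_elem (src_set G s u))
     else if vtype G s t u = (2,2) then (case col G s t u of (a,b,c,d) \<Rightarrow> f (a,b,c,d) (X a) (X b))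
     else 0)"

definition comp :: "('v,'e) pre_digraph \<Rightarrow> (nat \<Rightarrow> 'v) \<Rightarrow> (nat \<Rightarrow> 'v) \<Rightarrow>
   (nat \<times> nat \<times> nat \<times> nat \<Rightarrow> 'f::field \<Rightarrow> 'f \<Rightarrow> 'f) \<Rightarrow> 'v \<Rightarrow> ('e \<Rightarrow> 'f) \<Rightarrow> 'f" where
  "comp G s t f u \<rho> = (if card (src_set G s u) = 1
       then \<rho> (SOME e. e \<in> in_arcs G u \<and> src_set G s (tail G e) = src_set G s u)
     else if vtype G s t u = (2,2) then (case col G s t u of (a,b,c,d) \<Rightarrow>
        if \<exists>e\<in>in_arcs G u. src_set G s (tail G e) = src_set G s u
        then \<rho> (SOME e. e \<in> in_arcs G u \<and> src_set G s (tail G e) = src_set G s u)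
        else f (a,b,c,d) (\<rho> (SOME e. e \<in> in_arcs G u \<and> src_set G s (tail G e) = {a}))
                         (\<rho> (SOME e. e \<in> in_arcs G u \<and> src_set G s (tail G e) = {b})))
     else 0)"

lemma arc_adj: "e \<in> arcs G \<Longrightarrow> tail G e \<rightarrow>\<^bsub>G\<^esub> head G e"
  by (auto simp: arcs_ends_def arc_to_ends_def)

lemma L1:
  assumes "network G s t" "e \<in> arcs G"
  shows "src_set G s (tail G e) \<subseteq> src_set G s (head G e)"
proof -
  interpret fin_digraph G using assms(1) by (simp add: network_def)
  show ?thesis using assms(2) arc_adj[OF assms(2)]
    by (auto simp: src_set_def intro: reachable_adj_trans)
qed

lemma L2:
  assumes "network G s t" "e \<in> arcs G"
  shows "term_set G t (head G e) \<subseteq> term_set G t (tail G e)"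
proof -
  interpret fin_digraph G using assms(1) by (simp add: network_def)
  show ?thesis using assms(2) arc_adj[OF assms(2)]
    by (auto simp: term_set_def intro: adj_reachable_trans)
qed

lemma L3:
  assumes "network G s t" "i \<in> src_set G s u" "u \<noteq> s i"
  shows "\<exists>e\<in>arcs G. head G e = u \<and> i \<in> src_set G s (tail G e)"
proof -
  interpret fin_digraph G using assms(1) by (simp add: network_def)
  have r: "s i \<rightarrow>\<^sup>*\<^bsub>G\<^esub> u" and i: "i \<in> {1,2,3}" using assms(2) by (auto simp: src_set_def)
  have "u = s i \<or> (\<exists>e\<in>arcs G. head G e = u \<and> i \<in> src_set G s (tail G e))"
    using r
  proof (induct rule: reachable_induct)
    case base then show ?case by simp
  next
    case (step x y)
    then obtain e where "e \<in> arcs G" "tail G e = x" "head G e = y" by auto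
    then show ?case using step i by (auto simp: src_set_def)
  qed
  then show ?thesis using assms(3) by auto
qed

lemma L4:
  assumes "network G s t" "i \<in> {1,2,3}"
  shows "src_set G s (s i) = {i}"
proof -
  interpret fin_digraph G using assms(1) by (simp add: network_def)
  have "i \<in> src_set G s (s i)" using assms by (auto simp: src_set_def network_def)
  moreover have "j = i" if jin: "j \<in> src_set G s (s i)" for j
  proof (rule ccontr)
    assume "j \<noteq> i"
    have j: "j \<in> {1,2,3}" using that by (auto simp: src_set_def)
    have "s i \<noteq> s j" using \<open>j \<noteq> i\<close> j assms by (auto simp: network_def inj_on_def)
    then obtain e where "e \<in> arcs G" "head G e = s i" using L3[OF assms(1) jin] by auto
    then have "e \<in> in_arcs G (s i)" by simp
    then show False using assms by (auto simp: network_def)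
  qed
  ultimately show ?thesis by auto
qed

lemma Sfin: "src_set G s u \<subseteq> {1,2,3}" "term_set G t u \<subseteq> {1,2,3}"
  by (auto simp: src_set_def term_set_def)

lemma card2:
  assumes "card A = 2"
  shows "A = {Min A, Max A} \<and> Min A \<noteq> Max A"
proof -
  obtain x y where "A = {x,y}" "x \<noteq> y" using assms by (auto simp: card_2_iff)
  then show ?thesis by (cases "x < y") (auto simp: min_def max_def)
qed

lemma K:
  fixes f :: "nat \<times> nat \<times> nat \<times> nat \<Rightarrow> 'f::field \<Rightarrow> 'f \<Rightarrow> 'f"
  assumes net: "network G s t"
    and hyp: "\<forall>v\<in>verts G. vtype G s t v \<notin> {(3,3),(2,3),(3,2)}"
    and u: "u \<in> verts G" "u \<notin> s ` {1,2,3}"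
    and rho: "\<forall>e\<in>in_arcs G u. \<rho> e = VV G s t f X (tail G e)"
  shows "comp G s t f u \<rho> = VV G s t f X u"
proof -
  interpret fin_digraph G using net by (simp add: network_def)
  show ?thesis
  proof (cases "card (src_set G s u) = 1")
    case True
    then obtain i where Si: "src_set G s u = {i}" by (auto simp: card_1_singleton_iff)
    then have i: "i \<in> {1,2,3}" using Sfin(1)[of G s u] by auto
    have "u \<noteq> s i" using u i by auto
    then obtain e where e: "e \<in> arcs G" "head G e = u" "i \<in> src_set G s (tail G e)"
      using L3[OF net, of i u] Si by auto
    have "src_set G s (tail G e) = {i}" using L1[OF net e(1)] e Si by auto
    then have ex: "\<exists>e. e \<in> in_arcs G u \<and> src_set G s (tail G e) = src_set G s u"
      using e Si by auto
    define e0 where "e0 = (SOME e. e \<in> in_arcs G u \<and> src_set G s (tail G e) = src_set G s u)"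
    have e0: "e0 \<in> in_arcs G u" "src_set G s (tail G e0) = {i}"
      using someI_ex[OF ex] Si unfolding e0_def by auto
    have "comp G s t f u \<rho> = \<rho> e0" using True unfolding comp_def e0_def by simp
    also have "\<dots> = X i" using rho e0 by (simp add: VV_def)
    finally show ?thesis using True Si by (simp add: VV_def)
  next
    case False
    show ?thesis
    proof (cases "vtype G s t u = (2,2)")
      case False2: False
      then show ?thesis using False by (simp add: comp_def VV_def)
    next
      case True
      have cs: "card (src_set G s u) = 2" and ct: "card (term_set G t u) = 2"
        using True by (auto simp: vtype_def c_s_def c_t_def)
      define a where "a = Min (src_set G s u)"
      define b where "b = Max (src_set G s u)"
      have Sab: "src_set G s u = {a,b}" "a \<noteq> b" using card2[OF cs] a_def b_def by auto
      have colu: "col G s t u = (a, b, Min (term_set G t u), Max (term_set G t u))"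
        by (simp add: col_def a_def b_def)
      have VVu: "VV G s t f X u = f (a, b, Min (term_set G t u), Max (term_set G t u)) (X a) (X b)"
        using False True colu by (simp add: VV_def)
      show ?thesis
      proof (cases "\<exists>e\<in>in_arcs G u. src_set G s (tail G e) = src_set G s u")
        case True3: True
        define e0 where "e0 = (SOME e. e \<in> in_arcs G u \<and> src_set G s (tail G e) = src_set G s u)"
        have e0: "e0 \<in> in_arcs G u" "src_set G s (tail G e0) = src_set G s u"
        proof -
          have ex: "\<exists>e. e \<in> in_arcs G u \<and> src_set G s (tail G e) = src_set G s u"
            using True3 by blast
          show "e0 \<in> in_arcs G u" "src_set G s (tail G e0) = src_set G s u"
            using someI_ex[OF ex] unfolding e0_def by auto
        qed
        have tv: "tail G e0 \<in> verts G" using e0 by auto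
        have sub: "term_set G t u \<subseteq> term_set G t (tail G e0)" using L2[OF net, of e0] e0 by auto
        have fin: "finite (term_set G t (tail G e0))" by (rule finite_subset[OF Sfin(2)]) simp
        have "card (term_set G t (tail G e0)) \<le> 3"
          using card_mono[OF _ Sfin(2)[of G t "tail G e0"]] by simp
        moreover have "card (term_set G t (tail G e0)) \<ge> 2" using card_mono[OF fin sub] ct by simp
        moreover have "vtype G s t (tail G e0) \<noteq> (2,3)" using hyp tv by auto
        ultimately have "card (term_set G t (tail G e0)) = 2"
          using e0 cs by (auto simp: vtype_def c_s_def c_t_def)
        then have Teq: "term_set G t (tail G e0) = term_set G t u"
          using card_subset_eq[OF fin sub] ct by simp
        have "VV G s t f X (tail G e0) = VV G s t f X u"
          using e0 Teq cs unfolding VV_def vtype_def c_s_def c_t_def col_def by simp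
        moreover have "comp G s t f u \<rho> = \<rho> e0"
          using False True True3 colu unfolding comp_def e0_def by simp
        ultimately show ?thesis using rho e0 by simp
      next
        case False3: False
        have get: "\<exists>e. e \<in> in_arcs G u \<and> src_set G s (tail G e) = {x}" if x: "x \<in> {a,b}" for x
        proof -
          have xi: "x \<in> {1,2,3}" using x Sab Sfin(1)[of G s u] by auto
          have "u \<noteq> s x" using u xi by auto
          then obtain e where e: "e \<in> arcs G" "head G e = u" "x \<in> src_set G s (tail G e)"
            using L3[OF net, of x u] Sab x by auto
          have "src_set G s (tail G e) \<subseteq> {a,b}" using L1[OF net e(1)] e Sab by auto
          moreover have "src_set G s (tail G e) \<noteq> {a,b}" using False3 e Sab by auto
          ultimately have "src_set G s (tail G e) = {x}" using e x Sab by auto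
          then show ?thesis using e by auto
        qed
        define ea where "ea = (SOME e. e \<in> in_arcs G u \<and> src_set G s (tail G e) = {a})"
        define eb where "eb = (SOME e. e \<in> in_arcs G u \<and> src_set G s (tail G e) = {b})"
        have ea: "ea \<in> in_arcs G u" "src_set G s (tail G ea) = {a}"
          using someI_ex[OF get[of a]] unfolding ea_def by auto
        have eb: "eb \<in> in_arcs G u" "src_set G s (tail G eb) = {b}"
          using someI_ex[OF get[of b]] unfolding eb_def by auto
        have "\<rho> ea = X a" using rho ea by (simp add: VV_def)
        moreover have "\<rho> eb = X b" using rho eb by (simp add: VV_def)
        moreover have "comp G s t f u \<rho> = f (a, b, Min (term_set G t u), Max (term_set G t u)) (\<rho> ea) (\<rho> eb)"
          using False True False3 colu unfolding comp_def ea_def eb_def by simp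
        ultimately show ?thesis using VVu by simp
      qed
    qed
  qed
qed

definition anc :: "('v,'e) pre_digraph \<Rightarrow> 'v \<Rightarrow> nat" where
  "anc G u = card {w \<in> verts G. w \<rightarrow>\<^sup>*\<^bsub>G\<^esub> u}"

lemma M:
  assumes net: "network G s t" and e: "e \<in> arcs G"
  shows "anc G (tail G e) < anc G (head G e)"
proof -
  interpret fin_digraph G using net by (simp add: network_def)
  have acyc: "\<forall>v\<in>verts G. \<not> (v \<rightarrow>\<^sup>+\<^bsub>G\<^esub> v)" using net by (simp add: network_def)
  have adj: "tail G e \<rightarrow>\<^bsub>G\<^esub> head G e" using arc_adj[OF e] .
  have sub: "{w \<in> verts G. w \<rightarrow>\<^sup>*\<^bsub>G\<^esub> tail G e} \<subseteq> {w \<in> verts G. w \<rightarrow>\<^sup>*\<^bsub>G\<^esub> head G e}"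
    using adj by (auto intro: reachable_adj_trans)
  have hv: "head G e \<in> verts G" using e by auto
  have "\<not> (head G e \<rightarrow>\<^sup>*\<^bsub>G\<^esub> tail G e)"
  proof
    assume "head G e \<rightarrow>\<^sup>*\<^bsub>G\<^esub> tail G e"
    moreover have "tail G e \<rightarrow>\<^sup>+\<^bsub>G\<^esub> head G e" using adj by auto
    ultimately have "head G e \<rightarrow>\<^sup>+\<^bsub>G\<^esub> head G e" by (rule reachable_reachable1_trans)
    then show False using acyc hv by auto
  qed
  then have "head G e \<notin> {w \<in> verts G. w \<rightarrow>\<^sup>*\<^bsub>G\<^esub> tail G e}" by auto
  moreover have "head G e \<in> {w \<in> verts G. w \<rightarrow>\<^sup>*\<^bsub>G\<^esub> head G e}" using hv by auto
  ultimately have ps: "{w \<in> verts G. w \<rightarrow>\<^sup>*\<^bsub>G\<^esub> tail G e} \<subset> {w \<in> verts G. w \<rightarrow>\<^sup>*\<^bsub>G\<^esub> head G e}"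
    using sub by blast
  show ?thesis unfolding anc_def by (rule psubset_card_mono[OF _ ps]) simp
qed

lemma induct_val:
  fixes f :: "nat \<times> nat \<times> nat \<times> nat \<Rightarrow> 'f::field \<Rightarrow> 'f \<Rightarrow> 'f"
  assumes net: "network G s t"
    and hyp: "\<forall>v\<in>verts G. vtype G s t v \<notin> {(3,3),(2,3),(3,2)}"
    and ind: "induced G s (\<lambda>e x. x) (\<lambda>e. comp G s t f (tail G e)) X sigma"
  shows "e \<in> arcs G \<Longrightarrow> sigma e = VV G s t f X (tail G e)"
proof (induct e rule: measure_induct_rule[of "\<lambda>e. anc G (tail G e)"])
  case (less e)
  interpret fin_digraph G using net by (simp add: network_def)
  show ?case
  proof (cases "tail G e \<in> s ` {1,2,3}")
    case True
    then obtain i where i: "i \<in> {1,2,3}" "tail G e = s i" by auto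
    then have "sigma e = X i" using ind less.prems unfolding induced_def by blast
    then show ?thesis using L4[OF net i(1)] i by (simp add: VV_def)
  next
    case False
    then have se: "sigma e = comp G s t f (tail G e) (restrict sigma (in_arcs G (tail G e)))"
      using ind less.prems unfolding induced_def by blast
    have "\<forall>e'\<in>in_arcs G (tail G e). restrict sigma (in_arcs G (tail G e)) e' = VV G s t f X (tail G e')"
    proof
      fix e' assume e': "e' \<in> in_arcs G (tail G e)"
      have "anc G (tail G e') < anc G (tail G e)" using M[OF net, of e'] e' by auto
      then show "restrict sigma (in_arcs G (tail G e)) e' = VV G s t f X (tail G e')"
        using less.hyps e' by auto
    qed
    then have "comp G s t f (tail G e) (restrict sigma (in_arcs G (tail G e))) = VV G s t f X (tail G e)"
      by (rule K[OF net hyp tail_in_verts[OF less.prems] False])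
    then show ?thesis using se by simp
  qed
qed

theorem mainTheorem11:
  fixes G :: "('v,'e) pre_digraph" and s t :: "nat \<Rightarrow> 'v"
    and f :: "nat \<times> nat \<times> nat \<times> nat \<Rightarrow> 'f::{field,finite} \<Rightarrow> 'f \<Rightarrow> 'f"
  assumes "network G s t"
    and "\<forall>v\<in>verts G. vtype G s t v \<notin> {(3,3),(2,3),(3,2)}"
  shows "\<exists>(srcf :: 'e \<Rightarrow> 'f \<Rightarrow> 'f) (locf :: 'e \<Rightarrow> ('e \<Rightarrow> 'f) \<Rightarrow> 'f).
           \<forall>v\<in>verts G. vtype G s t v = (2,2) \<longrightarrow>
             (case col G s t v of (a,b,c,d) \<Rightarrow>
                computes G s srcf locf v (\<lambda>X. f (a,b,c,d) (X a) (X b)))"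
proof (intro exI ballI impI)
  fix v assume v: "v \<in> verts G" and ty: "vtype G s t v = (2,2)"
  have cs: "card (src_set G s v) = 2" using ty by (auto simp: vtype_def c_s_def)
  have nsrc: "v \<notin> s ` {1,2,3}"
  proof
    assume "v \<in> s ` {1,2,3}"
    then obtain i where "i \<in> {1,2,3}" "v = s i" by auto
    then show False using L4[OF assms(1)] cs by auto
  qed
  obtain a b c d where cl: "col G s t v = (a,b,c,d)" by (cases "col G s t v") auto
  have "computes G s (\<lambda>e x. x) (\<lambda>e. comp G s t f (tail G e)) v (\<lambda>X. f (a,b,c,d) (X a) (X b))"
    unfolding computes_def
  proof (intro exI allI impI)
    fix X sigma assume ind: "induced G s (\<lambda>e x. x) (\<lambda>e. comp G s t f (tail G e)) X sigma"
    have "\<forall>e\<in>in_arcs G v. restrict sigma (in_arcs G v) e = VV G s t f X (tail G e)"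
      using induct_val[OF assms ind] by auto
    then have "comp G s t f v (restrict sigma (in_arcs G v)) = VV G s t f X v"
      by (rule K[OF assms v nsrc])
    also have "\<dots> = f (a,b,c,d) (X a) (X b)" using cs ty cl by (simp add: VV_def)
    finally show "comp G s t f v (restrict sigma (in_arcs G v)) = f (a,b,c,d) (X a) (X b)" .
  qed
  then show "case col G s t v of (a,b,c,d) \<Rightarrow>
      computes G s (\<lambda>e x. x) (\<lambda>e. comp G s t f (tail G e)) v (\<lambda>X. f (a,b,c,d) (X a) (X b))"
    using cl by simp
qed

end
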